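(* Let $p$ be a prime, $\alpha\in[0,1]$ and $e\ge1$ an integer. The following are equivalent: (1) $\lfloor (p^e-1)\alpha\rfloor=p^e\langle\alpha\rangle_e$; (2) $\alpha\le p^e\langle\alpha\rangle^e$; (3) $\alpha\ge\frac{p^e}{p^e-1}\langle\alpha\rangle_e$.
   Context: For $\alpha\in(0,1]$, the non-terminating base $p$ expansion is the unique expression $\alpha=\sum_{e\ge1}a_e/p^e$ with integers $0\le a_e\le p-1$ not all eventually zero. The $e$-th truncation is $\langle\alpha\rangle_e:=\sum_{i=1}^e a_i/p^i$, and the $e$-th tail is $\langle\alpha\rangle^e:=\alpha-\langle\alpha\rangle_e$. By convention $\langle0\rangle_e=\langle0\rangle^e=0$. *)

theory Defs
  imports "HOL-Analysis.Analysis"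
begin

text \<open>Non-terminating base p digits of alpha in (0,1]: the unique digit sequence
  a_1, a_2, ... with 0 \<le> a_i \<le> p-1, sum a_i/p^i = alpha, not eventually zero.
  Index 0 is normalised to 0 so the sequence is unique.\<close>
definition nt_digits :: "nat \<Rightarrow> real \<Rightarrow> nat \<Rightarrow> nat" where
  "nt_digits p \<alpha> = (THE a. a 0 = 0 \<and> (\<forall>i. a i \<le> p - 1) \<and>
      ((\<lambda>i. real (a (Suc i)) / real p ^ Suc i) sums \<alpha>) \<and>
      \<not> (\<exists>N. \<forall>i\<ge>N. a i = 0))"

definition trunc :: "nat \<Rightarrow> real \<Rightarrow> nat \<Rightarrow> real" where
  "trunc p \<alpha> e = (if \<alpha> = 0 then 0
     else (\<Sum>i=1..e. real (nt_digits p \<alpha> i) / real p ^ i))"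

definition tail :: "nat \<Rightarrow> real \<Rightarrow> nat \<Rightarrow> real" where
  "tail p \<alpha> e = (if \<alpha> = 0 then 0 else \<alpha> - trunc p \<alpha> e)"

end

theory Submission imports Defs begin

definition ntP :: "nat \<Rightarrow> real \<Rightarrow> (nat \<Rightarrow> nat) \<Rightarrow> bool" where
  "ntP p \<alpha> a \<longleftrightarrow> a 0 = 0 \<and> (\<forall>i. a i \<le> p - 1) \<and>
      ((\<lambda>i. real (a (Suc i)) / real p ^ Suc i) sums \<alpha>) \<and>
      \<not> (\<exists>N. \<forall>i\<ge>N. a i = 0)"

lemma psum_reindex:
  "(\<Sum>i<n. real (a (Suc i)) / real p ^ Suc i) = (\<Sum>i=1..n. real (a i) / real p ^ i)"
  by (induction n) (auto simp: sum.cl_ivl_Suc)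

lemma psum_int:
  assumes "p > 0"
  shows "\<exists>k::nat. real p ^ n * (\<Sum>i=1..n. real (a i) / real p ^ i) = real k"
proof (induction n)
  case 0 then show ?case by auto
next
  case (Suc n)
  then obtain k where k: "real p ^ n * (\<Sum>i=1..n. real (a i) / real p ^ i) = real k" by blast
  have "real p ^ Suc n * (\<Sum>i=1..Suc n. real (a i) / real p ^ i)
      = real p * (real p ^ n * (\<Sum>i=1..n. real (a i) / real p ^ i)) + real (a (Suc n))"
    using assms by (simp add: sum.cl_ivl_Suc field_simps)
  also have "\<dots> = real (p * k + a (Suc n))" using k by simp
  finally show ?case by blast
qed

lemma tail_bounds:
  assumes P: "ntP p \<alpha> a" and p: "p \<ge> 2"
  shows "0 < \<alpha> - (\<Sum>i=1..n. real (a i) / real p ^ i)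
       \<and> \<alpha> - (\<Sum>i=1..n. real (a i) / real p ^ i) \<le> 1 / real p ^ n"
proof -
  define f where "f i = real (a (Suc i)) / real p ^ Suc i" for i
  have fs: "f sums \<alpha>" using P unfolding ntP_def f_def by auto
  have sh: "(\<lambda>i. f (i + n)) sums (\<alpha> - (\<Sum>i=1..n. real (a i) / real p ^ i))"
    using sums_split_initial_segment[OF fs, of n] psum_reindex[of a p n] by (simp add: f_def)
  have pr: "real p > 1" using p by simp
  define c where "c = (real p - 1) / real p ^ Suc n"
  have g: "(\<lambda>i. c * (1 / real p) ^ i) sums (c * (1 / (1 - 1 / real p)))"
    by (rule sums_mult, rule geometric_sums) (use pr in auto)
  have cv: "c * (1 / (1 - 1 / real p)) = 1 / real p ^ n"
    using pr by (simp add: c_def field_simps)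
  have le: "f (i + n) \<le> c * (1 / real p) ^ i" for i
  proof -
    have "real (a (Suc (i + n))) \<le> real p - 1" using P p unfolding ntP_def
      by (metis of_nat_1 of_nat_diff of_nat_le_iff one_le_numeral order_trans)
    hence "f (i + n) \<le> (real p - 1) / real p ^ Suc (i + n)"
      unfolding f_def by (rule divide_right_mono) simp
    also have "\<dots> = c * (1 / real p) ^ i"
      using pr by (simp add: c_def field_simps power_add)
    finally show ?thesis .
  qed
  have ub: "\<alpha> - (\<Sum>i=1..n. real (a i) / real p ^ i) \<le> 1 / real p ^ n"
    using sums_le[OF le sh g] cv by simp
  obtain j where j: "j \<ge> Suc n" "a j \<noteq> 0" using P unfolding ntP_def by blast
  have "f (j - Suc n + n) > 0" using j pr unfolding f_def
    by (simp add: Suc_diff_le)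
  hence "0 < suminf (\<lambda>i. f (i + n))"
    by (intro suminf_pos2[where i="j - Suc n"]) (use sh pr in \<open>auto simp: sums_iff f_def\<close>)
  hence "0 < \<alpha> - (\<Sum>i=1..n. real (a i) / real p ^ i)" using sh by (simp add: sums_iff)
  with ub show ?thesis by blast
qed

lemma psum_eq:
  assumes P: "ntP p \<alpha> a" and Q: "ntP p \<alpha> b" and p: "p \<ge> 2"
  shows "(\<Sum>i=1..n. real (a i) / real p ^ i) = (\<Sum>i=1..n. real (b i) / real p ^ i)"
proof -
  obtain k1 where k1: "real p ^ n * (\<Sum>i=1..n. real (a i) / real p ^ i) = real k1"
    using psum_int[of p n a] p by auto
  obtain k2 where k2: "real p ^ n * (\<Sum>i=1..n. real (b i) / real p ^ i) = real k2"
    using psum_int[of p n b] p by auto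
  have pn: "real p ^ n > 0" using p by simp
  note t1 = tail_bounds[OF P p, of n] and t2 = tail_bounds[OF Q p, of n]
  have a1: "real p ^ n * \<alpha> - 1 \<le> real k1 \<and> real k1 < real p ^ n * \<alpha>"
  proof -
    have "real p ^ n * (\<alpha> - (\<Sum>i=1..n. real (a i) / real p ^ i)) \<le> 1"
      using mult_left_mono[OF conjunct2[OF t1], of "real p ^ n"] pn p by (simp split: if_splits)
    moreover have "real p ^ n * (\<alpha> - (\<Sum>i=1..n. real (a i) / real p ^ i)) > 0"
      using t1 pn by simp
    ultimately show ?thesis using k1 by (simp add: right_diff_distrib)
  qed
  have a2: "real p ^ n * \<alpha> - 1 \<le> real k2 \<and> real k2 < real p ^ n * \<alpha>"
  proof -
    have "real p ^ n * (\<alpha> - (\<Sum>i=1..n. real (b i) / real p ^ i)) \<le> 1"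
      using mult_left_mono[OF conjunct2[OF t2], of "real p ^ n"] pn p by (simp split: if_splits)
    moreover have "real p ^ n * (\<alpha> - (\<Sum>i=1..n. real (b i) / real p ^ i)) > 0"
      using t2 pn by simp
    ultimately show ?thesis using k2 by (simp add: right_diff_distrib)
  qed
  have "\<bar>real k1 - real k2\<bar> < 1" using a1 a2 by linarith
  hence "k1 = k2" by linarith
  hence "real p ^ n * (\<Sum>i=1..n. real (a i) / real p ^ i) = real p ^ n * (\<Sum>i=1..n. real (b i) / real p ^ i)"
    using k1 k2 by simp
  thus ?thesis using pn p by simp
qed

lemma nt_unique:
  assumes P: "ntP p \<alpha> a" and Q: "ntP p \<alpha> b" and p: "p \<ge> 2"
  shows "a = b"
proof
  fix n show "a n = b n"
  proof (cases n)
    case 0 then show ?thesis using P Q by (simp add: ntP_def)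
  next
    case (Suc m)
    have "real (a (Suc m)) / real p ^ Suc m = real (b (Suc m)) / real p ^ Suc m"
      using psum_eq[OF P Q p, of "Suc m"] psum_eq[OF P Q p, of m] by (simp add: sum.cl_ivl_Suc)
    hence "real (a (Suc m)) = real (b (Suc m))" using p by simp
    then show ?thesis using Suc by simp
  qed
qed

lemma nt_exists:
  assumes p: "p \<ge> 2" and a0: "0 < \<alpha>" and a1: "\<alpha> \<le> 1"
  shows "\<exists>a. ntP p \<alpha> a"
proof -
  define c :: "nat \<Rightarrow> int" where "c n = \<lceil>real p ^ n * \<alpha>\<rceil> - 1" for n
  have cb: "real_of_int (c n) < real p ^ n * \<alpha> \<and> real p ^ n * \<alpha> \<le> real_of_int (c n) + 1" for n
    using ceiling_correct[of "real p ^ n * \<alpha>"] unfolding c_def by simp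
  have c0: "c 0 = 0" using a0 a1 unfolding c_def by (simp add: ceiling_eq_iff)
  have dlo: "p * c n \<le> c (Suc n)" for n
  proof -
    have "real p * real_of_int (c n) < real p ^ Suc n * \<alpha>"
      using cb[of n] p by simp
    hence "real_of_int (int p * c n) < real_of_int (c (Suc n)) + 1" using cb[of "Suc n"] by simp
    thus ?thesis by linarith
  qed
  have dhi: "c (Suc n) \<le> p * c n + (int p - 1)" for n
  proof -
    have "real p ^ Suc n * \<alpha> \<le> real p * (real_of_int (c n) + 1)"
      using cb[of n] p by simp
    hence "real_of_int (c (Suc n)) < real_of_int (int p * c n + int p)" using cb[of "Suc n"]
      by (simp add: algebra_simps)
    thus ?thesis by linarith
  qed
  define a where "a i = (if i = 0 then 0 else nat (c i - p * c (i - 1)))" for i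
  have aS: "real (a (Suc n)) = real_of_int (c (Suc n)) - real p * real_of_int (c n)" for n
    using dlo[of n] by (simp add: a_def)
  define f where "f i = real (a (Suc i)) / real p ^ Suc i" for i
  have ps: "(\<Sum>i<n. f i) = real_of_int (c n) / real p ^ n" for n
  proof (induction n)
    case 0 then show ?case using c0 by simp
  next
    case (Suc n) then show ?case using p by (simp add: f_def aS field_simps)
  qed
  have pr: "real p > 1" using p by simp
  have lim: "(\<lambda>n. real_of_int (c n) / real p ^ n) \<longlonglongrightarrow> \<alpha>"
  proof -
    have z: "(\<lambda>n. inverse (real p ^ n)) \<longlonglongrightarrow> 0" by (rule LIMSEQ_inverse_realpow_zero[OF pr])
    have "(\<lambda>n. \<alpha> - inverse (real p ^ n)) \<longlonglongrightarrow> \<alpha> - 0" by (intro tendsto_intros z)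
    hence l1: "(\<lambda>n. \<alpha> - inverse (real p ^ n)) \<longlonglongrightarrow> \<alpha>" by simp
    show ?thesis
    proof (rule tendsto_sandwich[OF _ _ l1 tendsto_const])
      have "\<alpha> - inverse (real p ^ n) \<le> real_of_int (c n) / real p ^ n" for n
      proof -
        have "real p ^ n * \<alpha> - 1 \<le> real_of_int (c n)" using cb[of n] by simp
        hence "(real p ^ n * \<alpha> - 1) / real p ^ n \<le> real_of_int (c n) / real p ^ n"
          by (rule divide_right_mono) (use pr in simp)
        thus ?thesis using pr by (simp add: field_simps)
      qed
      thus "\<forall>\<^sub>F n in sequentially. \<alpha> - inverse (real p ^ n) \<le> real_of_int (c n) / real p ^ n"
        by simp
      show "\<forall>\<^sub>F n in sequentially. real_of_int (c n) / real p ^ n \<le> \<alpha>"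
        using cb pr by (auto simp: field_simps less_imp_le)
    qed
  qed
  have fs: "f sums \<alpha>" unfolding sums_def using ps lim by simp
  have bnd: "a i \<le> p - 1" for i
  proof (cases i)
    case 0 then show ?thesis by (simp add: a_def)
  next
    case (Suc m) then show ?thesis using dhi[of m] dlo[of m] by (simp add: a_def nat_le_iff)
  qed
  have ne: "\<not> (\<exists>N. \<forall>i\<ge>N. a i = 0)"
  proof
    assume "\<exists>N. \<forall>i\<ge>N. a i = 0"
    then obtain N where N: "\<forall>i\<ge>N. a i = 0" by blast
    have "(\<lambda>i. f (i + N)) sums (\<alpha> - (\<Sum>i<N. f i))" by (rule sums_split_initial_segment[OF fs])
    moreover have "(\<lambda>i. f (i + N)) = (\<lambda>i. 0)" using N by (auto simp: f_def)
    ultimately have "\<alpha> = (\<Sum>i<N. f i)" using sums_unique2 by fastforce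
    thus False using ps[of N] cb[of N] pr by (simp add: field_simps)
  qed
  have ff: "(\<lambda>i. real (a (Suc i)) / real p ^ Suc i) = f" by (simp add: f_def fun_eq_iff)
  have "ntP p \<alpha> a" unfolding ntP_def ff using bnd fs ne by (simp add: a_def)
  thus ?thesis by blast
qed

theorem mainTheorem14:
  fixes p e :: nat and \<alpha> :: real
  assumes "prime p" and "0 \<le> \<alpha>" and "\<alpha> \<le> 1" and "e \<ge> 1"
  shows "(real_of_int \<lfloor>(real p ^ e - 1) * \<alpha>\<rfloor> = real p ^ e * trunc p \<alpha> e
            \<longleftrightarrow> \<alpha> \<le> real p ^ e * tail p \<alpha> e)
       \<and> (\<alpha> \<le> real p ^ e * tail p \<alpha> e
            \<longleftrightarrow> \<alpha> \<ge> real p ^ e / (real p ^ e - 1) * trunc p \<alpha> e)"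
proof (cases "\<alpha> = 0")
  case True then show ?thesis by (simp add: trunc_def tail_def)
next
  case False
  have p: "p \<ge> 2" using assms(1) by (simp add: prime_ge_2_nat)
  have a0: "\<alpha> > 0" using False assms(2) by simp
  have ex1: "\<exists>!a. ntP p \<alpha> a" using nt_exists[OF p a0 assms(3)] nt_unique[OF _ _ p] by blast
  have nt: "ntP p \<alpha> (nt_digits p \<alpha>)"
    unfolding nt_digits_def using theI'[OF ex1] unfolding ntP_def by simp
  define T where "T = (\<Sum>i=1..e. real (nt_digits p \<alpha> i) / real p ^ i)"
  define q where "q = real p ^ e"
  have tr: "trunc p \<alpha> e = T" and tl: "tail p \<alpha> e = \<alpha> - T"
    using False by (simp_all add: trunc_def tail_def T_def)
  have tb: "0 < \<alpha> - T" "\<alpha> - T \<le> 1 / q"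
    using tail_bounds[OF nt p, of e] by (simp_all add: T_def q_def)
  obtain k :: nat where k: "q * T = real k"
    using psum_int[of p e "nt_digits p \<alpha>"] p by (auto simp: T_def q_def)
  have q1: "q > 1"
  proof -
    have "real p ^ 1 \<le> real p ^ e" by (rule power_increasing) (use assms(4) p in auto)
    moreover have "real p \<ge> 2" using p by simp
    ultimately show ?thesis unfolding q_def by (simp only: power_one_right)
  qed
  have qt: "q * (\<alpha> - T) \<le> 1" using tb(2) q1 by (simp add: field_simps)
  define y where "y = q * (\<alpha> - T) - \<alpha>"
  have y1: "y < 1" using qt a0 by (simp add: y_def)
  have eq: "(q - 1) * \<alpha> = real k + y" using k by (simp add: y_def algebra_simps)
  have fl: "\<lfloor>(q - 1) * \<alpha>\<rfloor> = int k + \<lfloor>y\<rfloor>" unfolding eq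
    by (metis add.commute floor_add_int of_int_of_nat_eq)
  have c1: "(real_of_int \<lfloor>(q - 1) * \<alpha>\<rfloor> = q * T) \<longleftrightarrow> \<alpha> \<le> q * (\<alpha> - T)"
  proof -
    have "(real_of_int \<lfloor>(q - 1) * \<alpha>\<rfloor> = q * T) \<longleftrightarrow> \<lfloor>y\<rfloor> = 0"
      unfolding fl k by simp
    also have "\<dots> \<longleftrightarrow> 0 \<le> y" using y1 by (simp add: floor_eq_iff)
    also have "\<dots> \<longleftrightarrow> \<alpha> \<le> q * (\<alpha> - T)" by (simp add: y_def)
    finally show ?thesis .
  qed
  have c2: "\<alpha> \<le> q * (\<alpha> - T) \<longleftrightarrow> q / (q - 1) * T \<le> \<alpha>"
    using q1 by (simp add: field_simps)
  show ?thesis using c1 c2 unfolding tr tl q_def by simp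
qed

end
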